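(* Let $\mathcal M$ be a non-empty compact, locally connected Hausdorff space, $\vec\varphi:\mathcal M\to\mathbb R^k$ continuous, and $\vec y=(y_1,\dots,y_k)\in\mathbb R^k$. If $P,Q\in\mathcal M$ are $\langle\vec\varphi\preceq(y_1+\varepsilon,\dots,y_k+\varepsilon)\rangle$-connected for every $\varepsilon>0$, then $P$ and $Q$ are $\langle\vec\varphi\preceq\vec y\rangle$-connected.
   Context: For $\vec t\in\mathbb R^k$, $\mathcal M\langle\vec\varphi\preceq\vec t\rangle=\{P\in\mathcal M:\varphi_i(P)\le t_i,\ i=1,\dots,k\}$. Two points $P,Q\in\mathcal M$ are $\langle\vec\varphi\preceq\vec t\rangle$-connected if some connected subset of $\mathcal M\langle\vec\varphi\preceq\vec t\rangle$ contains both $P$ and $Q$. *)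

theory Defs
  imports "HOL-Analysis.Analysis"
begin

definition sublevel :: "'a topology \<Rightarrow> ('a \<Rightarrow> real^'k) \<Rightarrow> real^'k \<Rightarrow> 'a set" where
  "sublevel M phi t = {P \<in> topspace M. \<forall>i. phi P $ i \<le> t $ i}"

definition sublevel_connected :: "'a topology \<Rightarrow> ('a \<Rightarrow> real^'k) \<Rightarrow> real^'k \<Rightarrow> 'a \<Rightarrow> 'a \<Rightarrow> bool" where
  "sublevel_connected M phi t P Q \<longleftrightarrow>
     (\<exists>C. connectedin M C \<and> C \<subseteq> sublevel M phi t \<and> P \<in> C \<and> Q \<in> C)"

end

theory Submission
  imports Defs
begin

lemma le_of_all_eps:
  fixes a b :: real
  assumes "\<And>n::nat. a \<le> b + 1 / real (Suc n)"
  shows "a \<le> b"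
proof (rule ccontr)
  assume "\<not> a \<le> b"
  then have "a - b > 0" by simp
  then obtain n where "inverse (real (Suc n)) < a - b"
    using reals_Archimedean by blast
  with assms[of n] show False by (simp add: field_simps)
qed

theorem lemma5p1:
  fixes M :: "'a topology" and phi :: "'a \<Rightarrow> real^'k" and y :: "real^'k" and P Q :: 'a
  assumes "topspace M \<noteq> {}"
    and "compact_space M" and "locally_connected_space M" and "Hausdorff_space M"
    and "continuous_map M euclidean phi"
    and "P \<in> topspace M" and "Q \<in> topspace M"
    and "\<And>\<epsilon>. \<epsilon> > 0 \<Longrightarrow> sublevel_connected M phi (\<chi> i. y $ i + \<epsilon>) P Q"
  shows "sublevel_connected M phi y P Q"
proof -
  define S where "S n = sublevel M phi (\<chi> i. y $ i + 1 / real (Suc n))" for n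
  define K where "K n = connected_component_of_set (subtopology M (S n)) P" for n
  define K' where "K' = (\<Inter>n. K n)"
  have clS: "closedin M (S n)" for n
  proof -
    have "S n = {x \<in> topspace M. phi x \<in> {z. \<forall>i. z $ i \<le> (\<chi> i. y $ i + 1 / real (Suc n)) $ i}}"
      by (simp add: S_def sublevel_def)
    moreover have "closed {z::real^'k. \<forall>i. z $ i \<le> (\<chi> i. y $ i + 1 / real (Suc n)) $ i}"
      by (rule closed_interval_left_cart)
    ultimately show ?thesis
      using closedin_continuous_map_preimage[OF assms(5), of "{z::real^'k. \<forall>i. z $ i \<le> (\<chi> i. y $ i + 1 / real (Suc n)) $ i}"]
      by simp
  qed
  have clK: "closedin M (K n)" for n
    unfolding K_def using closedin_trans_full[OF closedin_connected_component_of clS] .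
  have KS: "K n \<subseteq> S n" for n
    unfolding K_def using connected_component_of_subset_topspace by fastforce
  have conK: "connectedin M (K n)" for n
    using connectedin_connected_component_of[of "subtopology M (S n)" P]
    unfolding K_def connectedin_subtopology by blast
  have PQ: "P \<in> K n \<and> Q \<in> K n" for n
  proof -
    have "(1::real) / real (Suc n) > 0" by simp
    from assms(8)[OF this] obtain C where C: "connectedin M C" "C \<subseteq> S n" "P \<in> C" "Q \<in> C"
      unfolding sublevel_connected_def S_def by blast
    then have "connectedin (subtopology M (S n)) C" by (simp add: connectedin_subtopology)
    from connected_component_of_maximal[OF this C(3)] C show ?thesis
      unfolding K_def by blast
  qed
  have Smono: "S m \<subseteq> S n" if "n \<le> m" for m n
  proof -
    have "1 / real (Suc m) \<le> 1 / real (Suc n)"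
      using that by (simp add: frac_le)
    then show ?thesis unfolding S_def sublevel_def
      by (auto intro: order_trans)
  qed
  have dec: "decseq K"
  proof (rule decseq_SucI)
    fix n
    have "connectedin (subtopology M (S n)) (K (Suc n))"
      using conK KS Smono[of n "Suc n"] by (auto simp: connectedin_subtopology)
    from connected_component_of_maximal[OF this] PQ show "K (Suc n) \<subseteq> K n"
      unfolding K_def by blast
  qed
  have K'sub: "K' \<subseteq> sublevel M phi y"
  proof
    fix x assume "x \<in> K'"
    then have x: "x \<in> S n" for n using KS unfolding K'_def by blast
    have "x \<in> topspace M" using x[of 0] unfolding S_def sublevel_def by blast
    moreover have "phi x $ i \<le> y $ i" for i
      by (rule le_of_all_eps) (use x in \<open>auto simp: S_def sublevel_def\<close>)
    ultimately show "x \<in> sublevel M phi y" unfolding sublevel_def by blast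
  qed
  have normal: "normal_space M"
    using assms(2,4) compact_Hausdorff_or_regular_imp_normal_space by blast
  have clK': "closedin M K'"
    unfolding K'_def using clK by (intro closedin_Inter) auto
  have "connectedin M K'"
    unfolding connectedin_closedin
  proof (intro conjI notI)
    show "K' \<subseteq> topspace M" using closedin_subset[OF clK'] .
  next
    assume "\<exists>E1 E2. closedin M E1 \<and> closedin M E2 \<and> K' \<subseteq> E1 \<union> E2 \<and>
              E1 \<inter> E2 \<inter> K' = {} \<and> E1 \<inter> K' \<noteq> {} \<and> E2 \<inter> K' \<noteq> {}"
    then obtain E1 E2 where E: "closedin M E1" "closedin M E2" "K' \<subseteq> E1 \<union> E2"
      "E1 \<inter> E2 \<inter> K' = {}" "E1 \<inter> K' \<noteq> {}" "E2 \<inter> K' \<noteq> {}" by blast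
    have "closedin M (E1 \<inter> K')" "closedin M (E2 \<inter> K')" "disjnt (E1 \<inter> K') (E2 \<inter> K')"
      using E clK' by (auto simp: disjnt_def)
    then obtain U V where UV: "openin M U" "openin M V" "E1 \<inter> K' \<subseteq> U" "E2 \<inter> K' \<subseteq> V" "disjnt U V"
      using normal unfolding normal_space_def by meson
    define D where "D n = K n \<inter> (topspace M - (U \<union> V))" for n
    have clD: "closedin M (D n)" for n
      unfolding D_def using clK UV by (intro closedin_Int closedin_diff) auto
    have decD: "decseq D"
      using dec unfolding decseq_def D_def by blast
    have "(\<Inter>n. D n) = {}"
      using E(3) UV(3,4) unfolding D_def K'_def by blast
    then obtain n where Dn: "D n = {}"
      using compact_space_imp_nest[OF assms(2) clD _ decD] by blast
    have "K n \<subseteq> U \<union> V"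
      using Dn closedin_subset[OF clK[of n]] unfolding D_def by blast
    moreover have "U \<inter> V \<inter> K n = {}" using UV(5) by (auto simp: disjnt_def)
    moreover have "U \<inter> K n \<noteq> {}" using E(5) UV(3) unfolding K'_def by blast
    moreover have "V \<inter> K n \<noteq> {}" using E(6) UV(4) unfolding K'_def by blast
    ultimately show False
      using conK[of n] UV(1,2) unfolding connectedin by blast
  qed
  moreover have "P \<in> K'" "Q \<in> K'" using PQ unfolding K'_def by auto
  ultimately show ?thesis
    unfolding sublevel_connected_def using K'sub by blast
qed

end
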